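(* Let $m\ge 2$ be an integer, let $\alpha_0\in(0,\tfrac{\pi}{2})$ and put $b=\tfrac12\tan\alpha_0>0$, so that $\arg(\tfrac12+bi)=\alpha_0$ and $\arg(\tfrac12-bi)=-\alpha_0$. Let $$S^m_{\alpha_0}=\Big\{z\in\mathbb{C}^m:\ \text{for each }k,\ z_k=0\text{ or }|\arg z_k|\le\alpha_0,\ \ \sum_{k=1}^m z_k=1\Big\}.$$ Then $S^m_{\alpha_0}$ is convex, and its set of extreme points consists of exactly $m^2$ points, namely: (i) the $m$ standard basis vectors $e^1,\dots,e^m$ of $\mathbb{C}^m$, and (ii) the $m(m-1)$ vectors $\eta$ having exactly two nonzero coordinates, one of them equal to $\tfrac12+bi$ and another equal to $\tfrac12-bi$ (one such vector for each ordered pair $(k,l)$ of distinct indices, with $\eta_k=\tfrac12+bi$, $\eta_l=\tfrac12-bi$, and all other coordinates $0$).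
   Context: $\arg$ denotes the principal argument with values in $(-\pi,\pi]$. A point $a$ of a set $S\subseteq\mathbb{C}^m$ is an extreme point if there are no $p,q\in S$ with $p\neq q$ and $\lambda\in(0,1)$ such that $a=\lambda p+(1-\lambda)q$. *)

theory Defs
  imports "HOL-Analysis.Analysis"
begin

text \<open>The set S^m_alpha0 in C^m, with coordinates indexed by a finite type 'n (m = CARD('n)).
  Arg is the principal argument with values in (-pi, pi].\<close>
definition sector_simplex :: "real \<Rightarrow> (complex ^ 'n::finite) set" where
  "sector_simplex \<alpha>0 =
     {z. (\<forall>k. z $ k = 0 \<or> \<bar>Arg (z $ k)\<bar> \<le> \<alpha>0) \<and> (\<Sum>k\<in>UNIV. z $ k) = 1}"

definition eta_vec :: "real \<Rightarrow> 'n::finite \<Rightarrow> 'n \<Rightarrow> complex ^ 'n" where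
  "eta_vec b k l = (\<chi> j. if j = k then Complex (1/2) b
                         else if j = l then Complex (1/2) (- b) else 0)"

end

theory Submission imports Defs begin

definition CS :: "real \<Rightarrow> (complex ^ 'n::finite) set" where
 "CS t = {z. (\<forall>k. \<bar>Im (z$k)\<bar> \<le> t * Re (z$k)) \<and> (\<Sum>k\<in>UNIV. z $ k) = 1}"

lemma cone_re: assumes "t > 0" "\<bar>Im w\<bar> \<le> t * Re w" shows "Re w \<ge> 0"
  using assms by (smt (verit) abs_ge_zero mult_pos_neg)

lemma cone_zero: assumes "t > 0" "\<bar>Im w\<bar> \<le> t * Re w" "Re w = 0" shows "w = 0"
  using assms by (simp add: complex_eq_iff)

lemma cone_nz: assumes "t > 0" "\<bar>Im w\<bar> \<le> t * Re w" "w \<noteq> 0" shows "Re w > 0"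
  using cone_re[OF assms(1,2)] cone_zero[OF assms(1,2)] assms(3) by force

lemma sec_iff:
  assumes "0 < a" "a < pi/2"
  shows "(w = 0 \<or> \<bar>Arg w\<bar> \<le> a) \<longleftrightarrow> \<bar>Im w\<bar> \<le> tan a * Re w"
proof (cases "w = 0")
  case True then show ?thesis by simp
next
  case False
  have t: "tan a > 0" using assms by (simp add: tan_gt_zero)
  show ?thesis
  proof (cases "Re w > 0")
    case True
    have A: "Arg w = arctan (Im w / Re w)" using True by (rule arg_conv_arctan)
    have at: "arctan (tan a) = a" using assms by (intro arctan_tan) auto
    have key: "\<bar>arctan y\<bar> \<le> a \<longleftrightarrow> \<bar>y\<bar> \<le> tan a" for y
    proof -
      have "arctan y \<le> a \<longleftrightarrow> y \<le> tan a" using at arctan_le_iff by metis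
      moreover have "-a \<le> arctan y \<longleftrightarrow> - tan a \<le> y" using at arctan_le_iff arctan_minus by metis
      ultimately show ?thesis by linarith
    qed
    then have "\<bar>Arg w\<bar> \<le> a \<longleftrightarrow> \<bar>Im w / Re w\<bar> \<le> tan a" using A by simp
    also have "\<dots> \<longleftrightarrow> \<bar>Im w\<bar> \<le> tan a * Re w" using True
      by (simp add: abs_div_pos[symmetric] pos_divide_le_eq)
    finally show ?thesis using False by simp
  next
    case nRe: False
    have "\<not> \<bar>Arg w\<bar> < pi/2" using Arg_Re_pos[of w] False nRe by auto
    hence "\<not> \<bar>Arg w\<bar> \<le> a" using assms by linarith
    moreover have "\<not> \<bar>Im w\<bar> \<le> tan a * Re w"
    proof
      assume h: "\<bar>Im w\<bar> \<le> tan a * Re w"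
      have "Re w \<ge> 0" using cone_re[OF t h] .
      then have "Re w = 0" using nRe by linarith
      then have "w = 0" using cone_zero[OF t h] by simp
      then show False using False by simp
    qed
    ultimately show ?thesis using False by simp
  qed
qed

lemma sector_CS: assumes "0 < a" "a < pi/2"
  shows "sector_simplex a = (CS (tan a) :: (complex^'n::finite) set)"
  by (simp add: sector_simplex_def CS_def sec_iff[OF assms])

lemma convex_CS: assumes "t \<ge> 0" shows "convex (CS t :: (complex^'n::finite) set)"
proof (rule convexI)
  fix x y :: "complex^'n" and u v :: real
  assume x: "x \<in> CS t" and y: "y \<in> CS t" and u: "0 \<le> u" and v: "0 \<le> v" and uv: "u + v = 1"
  have "\<bar>Im ((u *\<^sub>R x + v *\<^sub>R y) $ k)\<bar> \<le> t * Re ((u *\<^sub>R x + v *\<^sub>R y) $ k)" for k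
  proof -
    have hx: "\<bar>Im (x$k)\<bar> \<le> t * Re (x$k)" using x by (simp add: CS_def)
    have hy: "\<bar>Im (y$k)\<bar> \<le> t * Re (y$k)" using y by (simp add: CS_def)
    have "\<bar>Im ((u *\<^sub>R x + v *\<^sub>R y) $ k)\<bar> = \<bar>u * Im (x$k) + v * Im (y$k)\<bar>" by simp
    also have "\<dots> \<le> u * \<bar>Im (x$k)\<bar> + v * \<bar>Im (y$k)\<bar>" using u v
      by (metis abs_mult abs_of_nonneg abs_triangle_ineq)
    also have "\<dots> \<le> u * (t * Re (x$k)) + v * (t * Re (y$k))"
      using u v hx hy by (intro add_mono mult_left_mono) auto
    also have "\<dots> = t * Re ((u *\<^sub>R x + v *\<^sub>R y) $ k)" by (simp add: algebra_simps)
    finally show ?thesis .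
  qed
  moreover have "(\<Sum>k\<in>UNIV. (u *\<^sub>R x + v *\<^sub>R y) $ k) = 1"
  proof -
    have "(\<Sum>k\<in>UNIV. (u *\<^sub>R x + v *\<^sub>R y) $ k) = u *\<^sub>R (\<Sum>k\<in>UNIV. x $ k) + v *\<^sub>R (\<Sum>k\<in>UNIV. y $ k)"
      by (simp add: sum.distrib scaleR_sum_right)
    also have "\<dots> = 1" using x y uv by (simp add: CS_def scaleR_conv_of_real flip: of_real_add)
    finally show ?thesis .
  qed
  ultimately show "u *\<^sub>R x + v *\<^sub>R y \<in> CS t" by (simp add: CS_def)
qed


lemma sum_single: "(\<And>j. j \<noteq> k \<Longrightarrow> f j = 0) \<Longrightarrow> (\<Sum>j\<in>(UNIV::'n::finite set). f j) = (f k :: complex)"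
proof -
  assume h: "\<And>j. j \<noteq> k \<Longrightarrow> f j = 0"
  have "(\<Sum>j\<in>(UNIV::'n set). f j) = f k + (\<Sum>j\<in>UNIV - {k}. f j)"
    by (simp add: sum.remove)
  also have "(\<Sum>j\<in>UNIV - {k}. f j) = 0" using h by (intro sum.neutral) auto
  finally show ?thesis by simp
qed

lemma sum_two: assumes "k \<noteq> l" "\<And>j. j \<noteq> k \<Longrightarrow> j \<noteq> l \<Longrightarrow> f j = 0"
  shows "(\<Sum>j\<in>(UNIV::'n::finite set). f j) = (f k + f l :: complex)"
proof -
  have "(\<Sum>j\<in>UNIV. f j) = (\<Sum>j\<in>{k,l}. f j)"
    using assms(2) by (intro sum.mono_neutral_cong_right) auto
  also have "\<dots> = f k + f l" using assms(1) by simp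
  finally show ?thesis .
qed

lemma sum_axis: "(\<Sum>k\<in>UNIV. (axis j c :: complex^'n::finite) $ k) = c"
  by (simp add: axis_def)

lemma zero_comb:
  assumes t: "t > 0" and a: "\<bar>Im a\<bar> \<le> t * Re a" and b: "\<bar>Im b\<bar> \<le> t * Re b"
    and u: "0 < u" "u < 1" and e: "(1-u) * Re a + u * Re b = 0"
  shows "a = 0 \<and> b = 0"
proof -
  have ra: "Re a \<ge> 0" using cone_re[OF t a] .
  have rb: "Re b \<ge> 0" using cone_re[OF t b] .
  have "(1-u) * Re a \<ge> 0" "u * Re b \<ge> 0" using ra rb u by auto
  then have "(1-u) * Re a = 0" "u * Re b = 0" using e by linarith+
  then have "Re a = 0" "Re b = 0" using u by auto
  then show ?thesis using cone_zero[OF t a] cone_zero[OF t b] by auto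
qed

lemma axis_in: assumes "t > 0" shows "(axis k 1 :: complex^'n::finite) \<in> CS t"
  using assms by (simp add: CS_def axis_def)

lemma axis_ext: assumes t: "t > 0"
  shows "(axis k 1 :: complex^'n::finite) extreme_point_of CS t"
  unfolding extreme_point_of_def
proof (intro conjI ballI)
  show "(axis k 1 :: complex^'n::finite) \<in> CS t" using axis_in[OF t] .
  fix a b :: "complex^'n" assume a: "a \<in> CS t" and b: "b \<in> CS t"
  show "axis k 1 \<notin> open_segment a b"
  proof
    assume "axis k 1 \<in> open_segment a b"
    then obtain u where ab: "a \<noteq> b" and u: "0<u" "u<1" and x: "axis k 1 = (1-u) *\<^sub>R a + u *\<^sub>R b"
      by (auto simp: in_segment)
    have ca: "\<bar>Im (a$j)\<bar> \<le> t * Re (a$j)" for j using a by (simp add: CS_def)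
    have cb: "\<bar>Im (b$j)\<bar> \<le> t * Re (b$j)" for j using b by (simp add: CS_def)
    have z: "a$j = 0 \<and> b$j = 0" if "j \<noteq> k" for j
    proof -
      have "Re ((axis k 1 :: complex^'n) $ j) = 0" using that by (simp add: axis_def)
      hence "(1-u) * Re (a$j) + u * Re (b$j) = 0" by (simp add: x)
      then show ?thesis using zero_comb[OF t ca cb u] by blast
    qed
    have "a$k = 1" using a z sum_single[of k "\<lambda>j. a$j"] by (simp add: CS_def)
    then have "a = axis k 1" using z by (simp add: vec_eq_iff axis_def)
    moreover have "b$k = 1" using b z sum_single[of k "\<lambda>j. b$j"] by (simp add: CS_def)
    then have "b = axis k 1" using z by (simp add: vec_eq_iff axis_def)
    ultimately show False using ab by simp
  qed
qed

lemma eta_char: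
  assumes t: "t > 0" and z: "(\<Sum>j\<in>UNIV. z$j) = 1" and kl: "k \<noteq> l"
    and up: "Im (z$k) = t * Re (z$k)" and lo: "Im (z$l) = - t * Re (z$l)"
    and oth: "\<And>j. j \<noteq> k \<Longrightarrow> j \<noteq> l \<Longrightarrow> z$j = 0"
  shows "z = eta_vec (t/2) k (l::'n::finite)"
proof -
  have "z$k + z$l = 1" using z sum_two[OF kl, of "\<lambda>j. z$j"] oth by simp
  then have r: "Re (z$k) + Re (z$l) = 1" and i: "Im (z$k) + Im (z$l) = 0"
    by (auto simp: complex_eq_iff)
  from i up lo have "t * (Re (z$k) - Re (z$l)) = 0" by (simp add: algebra_simps)
  then have "Re (z$k) = Re (z$l)" using t by simp
  then have rk: "Re (z$k) = 1/2" and rl: "Re (z$l) = 1/2" using r by auto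
  have zk: "z$k = Complex (1/2) (t/2)" using rk up by (simp add: complex_eq_iff)
  have zl: "z$l = Complex (1/2) (-(t/2))" using rl lo by (simp add: complex_eq_iff)
  show ?thesis unfolding vec_eq_iff eta_vec_def using zk zl oth kl by auto
qed

lemma eta_in: assumes t: "t > 0" and kl: "k \<noteq> l"
  shows "eta_vec (t/2) k (l::'n::finite) \<in> CS t"
proof -
  have "(\<Sum>j\<in>UNIV. eta_vec (t/2) k l $ j) = eta_vec (t/2) k l $ k + eta_vec (t/2) k l $ l"
    using kl by (intro sum_two) (auto simp: eta_vec_def)
  also have "\<dots> = 1" using kl by (simp add: eta_vec_def complex_eq_iff)
  finally show ?thesis using t kl by (auto simp: CS_def eta_vec_def)
qed

lemma eta_ext: assumes t: "t > 0" and kl: "k \<noteq> l"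
  shows "eta_vec (t/2) k (l::'n::finite) extreme_point_of CS t"
  unfolding extreme_point_of_def
proof (intro conjI ballI)
  show "eta_vec (t/2) k l \<in> CS t" using eta_in[OF t kl] .
  fix a b :: "complex^'n" assume a: "a \<in> CS t" and b: "b \<in> CS t"
  show "eta_vec (t/2) k l \<notin> open_segment a b"
  proof
    assume "eta_vec (t/2) k l \<in> open_segment a b"
    then obtain u where ab: "a \<noteq> b" and u: "0<u" "u<1" and x: "eta_vec (t/2) k l = (1-u) *\<^sub>R a + u *\<^sub>R b"
      by (auto simp: in_segment)
    have ca: "\<bar>Im (a$j)\<bar> \<le> t * Re (a$j)" for j using a by (simp add: CS_def)
    have cb: "\<bar>Im (b$j)\<bar> \<le> t * Re (b$j)" for j using b by (simp add: CS_def)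
    have xj: "eta_vec (t/2) k l $ j = (1-u) *\<^sub>R a$j + u *\<^sub>R b$j" for j by (simp add: x)
    have z: "a$j = 0 \<and> b$j = 0" if "j \<noteq> k" "j \<noteq> l" for j
    proof -
      have "Re (eta_vec (t/2) k l $ j) = 0" using that by (simp add: eta_vec_def)
      hence "(1-u) * Re (a$j) + u * Re (b$j) = 0" by (simp add: xj)
      then show ?thesis using zero_comb[OF t ca cb u] by blast
    qed
    have ek: "(1-u) * Re (a$k) + u * Re (b$k) = 1/2" "(1-u) * Im (a$k) + u * Im (b$k) = t/2"
      using xj[of k] by (auto simp: eta_vec_def complex_eq_iff)
    have el: "(1-u) * Re (a$l) + u * Re (b$l) = 1/2" "(1-u) * Im (a$l) + u * Im (b$l) = -(t/2)"
      using xj[of l] kl by (auto simp: eta_vec_def complex_eq_iff)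
    define A where "A = t * Re (a$k) - Im (a$k)"
    define B where "B = t * Re (b$k) - Im (b$k)"
    have A0: "A \<ge> 0" "B \<ge> 0" using ca[of k] cb[of k] by (auto simp: A_def B_def)
    have "(1-u) * A + u * B = t * ((1-u) * Re (a$k) + u * Re (b$k)) - ((1-u) * Im (a$k) + u * Im (b$k))"
      by (simp add: A_def B_def algebra_simps)
    also have "\<dots> = 0" unfolding ek by simp
    finally have s: "(1-u) * A + u * B = 0" .
    have "(1-u) * A \<ge> 0" "u * B \<ge> 0" using A0 u by auto
    then have "(1-u) * A = 0" "u * B = 0" using s by linarith+
    then have "A = 0" "B = 0" using u by auto
    then have uk: "Im (a$k) = t * Re (a$k)" "Im (b$k) = t * Re (b$k)" by (auto simp: A_def B_def)
    define A' where "A' = t * Re (a$l) + Im (a$l)"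
    define B' where "B' = t * Re (b$l) + Im (b$l)"
    have A0': "A' \<ge> 0" "B' \<ge> 0" using ca[of l] cb[of l] by (auto simp: A'_def B'_def)
    have "(1-u) * A' + u * B' = t * ((1-u) * Re (a$l) + u * Re (b$l)) + ((1-u) * Im (a$l) + u * Im (b$l))"
      by (simp add: A'_def B'_def algebra_simps)
    also have "\<dots> = 0" unfolding el by simp
    finally have s': "(1-u) * A' + u * B' = 0" .
    have "(1-u) * A' \<ge> 0" "u * B' \<ge> 0" using A0' u by auto
    then have "(1-u) * A' = 0" "u * B' = 0" using s' by linarith+
    then have "A' = 0" "B' = 0" using u by auto
    then have ul: "Im (a$l) = - t * Re (a$l)" "Im (b$l) = - t * Re (b$l)" by (auto simp: A'_def B'_def)
    have "a = eta_vec (t/2) k l"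
      using eta_char[OF t _ kl uk(1) ul(1)] a z by (auto simp: CS_def)
    moreover have "b = eta_vec (t/2) k l"
      using eta_char[OF t _ kl uk(2) ul(2)] b z by (auto simp: CS_def)
    ultimately show False using ab by simp
  qed
qed


lemma pert:
  assumes t: "t>0" and z: "z \<in> CS t" and ij: "i \<noteq> j" and zj: "z$j \<noteq> 0"
    and s: "0 < s" "s \<le> 1"
    and c1: "\<bar>Im (z$i + of_real s * z$j)\<bar> \<le> t * Re (z$i + of_real s * z$j)"
    and c2: "\<bar>Im (z$i - of_real s * z$j)\<bar> \<le> t * Re (z$i - of_real s * z$j)"
  shows "\<not> z extreme_point_of (CS t :: (complex^'n::finite) set)"
proof
  assume ext: "z extreme_point_of CS t"
  define c where "c = of_real s * z$j"
  define d where "d = axis j c - axis i c"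
  have cz: "\<bar>Im (z$k)\<bar> \<le> t * Re (z$k)" for k using z by (simp add: CS_def)
  have sz: "(\<Sum>k\<in>UNIV. z$k) = 1" using z by (simp add: CS_def)
  have sd: "(\<Sum>k\<in>UNIV. d$k) = 0" by (simp add: d_def sum_subtractf sum_axis)
  have dj: "d$j = c" using ij by (simp add: d_def axis_def)
  have dne: "d \<noteq> 0" using dj zj s by (auto simp: c_def)
  have jp: "\<bar>Im ((1 + s) *\<^sub>R z$j)\<bar> \<le> t * Re ((1 + s) *\<^sub>R z$j)"
    using cz[of j] s by (simp add: abs_mult)
  have jm: "\<bar>Im ((1 - s) *\<^sub>R z$j)\<bar> \<le> t * Re ((1 - s) *\<^sub>R z$j)"
    using cz[of j] s by (simp add: abs_mult) (metis mult.left_commute mult_left_mono diff_ge_0_iff_ge)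
  have "z + d \<in> CS t"
  proof -
    have "\<bar>Im ((z+d)$k)\<bar> \<le> t * Re ((z+d)$k)" for k
    proof -
      consider "k = j" | "k = i" | "k \<noteq> i" "k \<noteq> j" by blast
      then show ?thesis
      proof cases
        case 1 then have "(z+d)$k = (1 + s) *\<^sub>R z$j" using ij
          by (simp add: d_def axis_def c_def scaleR_conv_of_real algebra_simps)
        then show ?thesis using jp by simp
      next
        case 2 then have "(z+d)$k = z$i - of_real s * z$j" using ij
          by (simp add: d_def axis_def c_def)
        then show ?thesis using c2 by simp
      next
        case 3 then show ?thesis using cz[of k] by (simp add: d_def axis_def)
      qed
    qed
    moreover have "(\<Sum>k\<in>UNIV. (z+d)$k) = 1" using sz sd by (simp add: sum.distrib)
    ultimately show ?thesis by (simp add: CS_def)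
  qed
  moreover have "z - d \<in> CS t"
  proof -
    have "\<bar>Im ((z-d)$k)\<bar> \<le> t * Re ((z-d)$k)" for k
    proof -
      consider "k = j" | "k = i" | "k \<noteq> i" "k \<noteq> j" by blast
      then show ?thesis
      proof cases
        case 1 then have "(z-d)$k = (1 - s) *\<^sub>R z$j" using ij
          by (simp add: d_def axis_def c_def scaleR_conv_of_real algebra_simps)
        then show ?thesis using jm by simp
      next
        case 2 then have "(z-d)$k = z$i + of_real s * z$j" using ij
          by (simp add: d_def axis_def c_def)
        then show ?thesis using c1 by simp
      next
        case 3 then show ?thesis using cz[of k] by (simp add: d_def axis_def)
      qed
    qed
    moreover have "(\<Sum>k\<in>UNIV. (z-d)$k) = 1" using sz sd by (simp add: sum_subtractf)
    ultimately show ?thesis by (simp add: CS_def)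
  qed
  moreover have "midpoint (z+d) (z-d) = z"
  proof -
    have e: "(z+d)+(z-d) = 2 *\<^sub>R z" by (simp add: scaleR_2)
    show ?thesis unfolding midpoint_def e by simp
  qed
  moreover have "z + d \<noteq> z - d"
  proof
    assume "z+d = z-d"
    hence "(z+d)$j = (z-d)$j" by (rule arg_cong)
    hence "z$j + c = z$j - c" using dj by (simp only: vector_add_component vector_minus_component)
    hence "c = 0" by (simp add: eq_neg_iff_add_eq_0 flip: mult_2)
    thus False using zj s by (simp add: c_def)
  qed
  ultimately show False using ext midpoint_in_open_segment[of "z+d" "z-d"]
    unfolding extreme_point_of_def by metis
qed


lemma ray_ok: "\<bar>\<sigma>\<bar> = 1 \<Longrightarrow> t \<ge> 0 \<Longrightarrow> Im w = \<sigma> * t * Re w \<Longrightarrow> Re w \<ge> 0 \<Longrightarrow> \<bar>Im w\<bar> \<le> t * Re w"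
  by (simp add: abs_mult)

lemma classify:
  assumes t: "t > 0" and ext: "z extreme_point_of (CS t :: (complex^'n::finite) set)"
  shows "(\<exists>k. z = axis k 1) \<or> (\<exists>k l. k \<noteq> l \<and> z = eta_vec (t/2) k l)"
proof -
  have z: "z \<in> CS t" using ext by (simp add: extreme_point_of_def)
  have cz: "\<bar>Im (z$k)\<bar> \<le> t * Re (z$k)" for k using z by (simp add: CS_def)
  have sz: "(\<Sum>k\<in>UNIV. z$k) = 1" using z by (simp add: CS_def)
  have rp: "Re (z$k) > 0" if "z$k \<noteq> 0" for k using cone_nz[OF t cz that] .
  have bd: "\<bar>Im (z$i)\<bar> = t * Re (z$i)" if ij: "i \<noteq> j" "z$i \<noteq> 0" "z$j \<noteq> 0" for i j
  proof (rule ccontr)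
    assume "\<bar>Im (z$i)\<bar> \<noteq> t * Re (z$i)"
    then have lt: "\<bar>Im (z$i)\<bar> < t * Re (z$i)" using cz[of i] by linarith
    define \<delta> where "\<delta> = t * Re (z$i) - \<bar>Im (z$i)\<bar>"
    define M where "M = 2 * t * Re (z$j)"
    have \<delta>: "\<delta> > 0" using lt by (simp add: \<delta>_def)
    have M: "M > 0" using t rp[OF ij(3)] by (simp add: M_def)
    define s where "s = min 1 (\<delta> / M)"
    have s: "0 < s" "s \<le> 1" using \<delta> M by (auto simp: s_def)
    have "s \<le> \<delta> / M" by (simp add: s_def)
    then have sM: "s * M \<le> \<delta>" using pos_le_divide_eq[OF M] by simp
    have sM2: "s * M = 2 * (s * (t * Re (z$j)))" by (simp add: M_def)
    have e1: "s * \<bar>Im (z$j)\<bar> \<le> s * (t * Re (z$j))" using cz[of j] s by (intro mult_left_mono) auto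
    have e2: "s * \<bar>Im (z$j)\<bar> = \<bar>s * Im (z$j)\<bar>" using s by (simp add: abs_mult)
    have e3: "s * (t * Re (z$j)) \<ge> 0" using s t rp[OF ij(3)] by simp
    have c1: "\<bar>Im (z$i + of_real s * z$j)\<bar> \<le> t * Re (z$i + of_real s * z$j)"
    proof -
      have "\<bar>Im (z$i) + s * Im (z$j)\<bar> \<le> t * Re (z$i) + s * (t * Re (z$j))"
        using e1 e2 cz[of i] by (smt (verit) abs_triangle_ineq)
      then show ?thesis by (simp add: algebra_simps)
    qed
    have c2: "\<bar>Im (z$i - of_real s * z$j)\<bar> \<le> t * Re (z$i - of_real s * z$j)"
    proof -
      have "\<bar>Im (z$i) - s * Im (z$j)\<bar> \<le> t * Re (z$i) - s * (t * Re (z$j))"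
        using e1 e2 sM sM2 \<delta>_def by (smt (verit) abs_triangle_ineq4)
      then show ?thesis by (simp add: algebra_simps)
    qed
    show False using pert[OF t z ij(1) ij(3) s c1 c2] ext by simp
  qed
  have nup: False if ij: "i \<noteq> j" "z$i \<noteq> 0" "z$j \<noteq> 0" and sg: "\<bar>\<sigma>\<bar> = 1"
      and hi: "Im (z$i) = \<sigma> * t * Re (z$i)" and hj: "Im (z$j) = \<sigma> * t * Re (z$j)" for i j \<sigma>
  proof -
    have ri: "Re (z$i) > 0" and rj: "Re (z$j) > 0" using rp ij by auto
    define s where "s = min 1 (Re (z$i) / Re (z$j))"
    have s: "0 < s" "s \<le> 1" using ri rj by (auto simp: s_def)
    have "s \<le> Re (z$i) / Re (z$j)" by (simp add: s_def)
    then have sr: "s * Re (z$j) \<le> Re (z$i)" using pos_le_divide_eq[OF rj] by simp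
    have c1: "\<bar>Im (z$i + of_real s * z$j)\<bar> \<le> t * Re (z$i + of_real s * z$j)"
      apply (rule ray_ok[OF sg])
      using t s ri rj hi hj by (auto simp: algebra_simps)
    have c2: "\<bar>Im (z$i - of_real s * z$j)\<bar> \<le> t * Re (z$i - of_real s * z$j)"
      apply (rule ray_ok[OF sg])
      using t s sr hi hj by (auto simp: algebra_simps)
    show False using pert[OF t z ij(1) ij(3) s c1 c2] ext by simp
  qed
  have nup1: False if "i \<noteq> j" "z$i \<noteq> 0" "z$j \<noteq> 0" "Im (z$i) = t * Re (z$i)" "Im (z$j) = t * Re (z$j)" for i j
    using nup[of i j 1] that by simp
  have nup2: False if "i \<noteq> j" "z$i \<noteq> 0" "z$j \<noteq> 0" "Im (z$i) = - t * Re (z$i)" "Im (z$j) = - t * Re (z$j)" for i j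
    using nup[of i j "-1"] that by simp
  show ?thesis
  proof (cases "\<exists>i j. i \<noteq> j \<and> z$i \<noteq> 0 \<and> z$j \<noteq> 0")
    case True
    then obtain i j where ij: "i \<noteq> j" "z$i \<noteq> 0" "z$j \<noteq> 0" by blast
    have side: "Im (z$k) = t * Re (z$k) \<or> Im (z$k) = - t * Re (z$k)" if "z$k \<noteq> 0" for k
    proof -
      have "\<exists>j'. j' \<noteq> k \<and> z$j' \<noteq> 0" using ij by (cases "k = i") auto
      then obtain j' where "j' \<noteq> k" "z$j' \<noteq> 0" by blast
      then have "\<bar>Im (z$k)\<bar> = t * Re (z$k)" using bd[of k j'] that by auto
      then show ?thesis by (auto simp: abs_if split: if_splits)
    qed
    obtain k l where kl: "k \<noteq> l" "z$k \<noteq> 0" "z$l \<noteq> 0" and up: "Im (z$k) = t * Re (z$k)"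
      and lo: "Im (z$l) = - t * Re (z$l)"
    proof -
      consider "Im (z$i) = t * Re (z$i)" "Im (z$j) = - t * Re (z$j)"
        | "Im (z$i) = - t * Re (z$i)" "Im (z$j) = t * Re (z$j)"
        using side[OF ij(2)] side[OF ij(3)] nup1[OF ij] nup2[OF ij] by blast
      then show ?thesis
      proof cases
        case 1 then show ?thesis using that ij by blast
      next
        case 2 then show ?thesis using that[of j i] ij by blast
      qed
    qed
    have oth: "z$m = 0" if "m \<noteq> k" "m \<noteq> l" for m
    proof (rule ccontr)
      assume nz: "z$m \<noteq> 0"
      show False using side[OF nz]
      proof
        assume "Im (z$m) = t * Re (z$m)"
        then show False using nup1[of m k] that nz kl up by blast
      next
        assume "Im (z$m) = - t * Re (z$m)"
        then show False using nup2[of m l] that nz kl lo by blast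
      qed
    qed
    have "z = eta_vec (t/2) k l" using eta_char[OF t sz kl(1) up lo] oth by blast
    then show ?thesis using kl by blast
  next
    case False
    have "\<exists>k. z$k \<noteq> 0"
    proof (rule ccontr)
      assume "\<not> (\<exists>k. z$k \<noteq> 0)"
      then have "(\<Sum>k\<in>UNIV. z$k) = 0" by simp
      then show False using sz by simp
    qed
    then obtain k where k: "z$k \<noteq> 0" by blast
    have oth: "z$j = 0" if "j \<noteq> k" for j using False k that by blast
    have "z$k = 1" using sz sum_single[of k "\<lambda>j. z$j"] oth by simp
    then have "z = axis k 1" using oth by (simp add: vec_eq_iff axis_def)
    then show ?thesis by blast
  qed
qed


theorem theorem3p1:
  fixes \<alpha>0 :: real and b :: real
  assumes m2: "CARD('n::finite) \<ge> 2"
    and a0: "0 < \<alpha>0" "\<alpha>0 < pi / 2"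
    and b_def: "b = tan \<alpha>0 / 2"
  shows "b > 0 \<and> Arg (Complex (1/2) b) = \<alpha>0 \<and> Arg (Complex (1/2) (- b)) = - \<alpha>0
    \<and> convex (sector_simplex \<alpha>0 :: (complex ^ 'n) set)
    \<and> {x. x extreme_point_of (sector_simplex \<alpha>0 :: (complex ^ 'n) set)}
        = {axis k 1 | k. True} \<union> {eta_vec b k l | k l. k \<noteq> l}
    \<and> card {x. x extreme_point_of (sector_simplex \<alpha>0 :: (complex ^ 'n) set)} = CARD('n) ^ 2"
proof -
  define t where "t = tan \<alpha>0"
  have t: "t > 0" using a0 by (simp add: t_def tan_gt_zero)
  have bt: "b = t/2" using b_def t_def by simp
  have b0: "b > 0" using t bt by simp
  have at: "arctan (tan \<alpha>0) = \<alpha>0" using a0 by (intro arctan_tan) auto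
  have q1: "b / (1/2) = tan \<alpha>0" using bt t_def by simp
  have A1: "Arg (Complex (1/2) b) = \<alpha>0"
    using arg_conv_arctan[of "Complex (1/2) b"] q1 at by simp
  have q2: "(-b) / (1/2) = - tan \<alpha>0" using bt t_def by simp
  have A2: "Arg (Complex (1/2) (-b)) = - \<alpha>0"
    using arg_conv_arctan[of "Complex (1/2) (-b)"] q2 at by (simp add: arctan_minus)
  have S: "(sector_simplex \<alpha>0 :: (complex ^ 'n) set) = CS t" using sector_CS[OF a0] t_def by simp
  have cv: "convex (sector_simplex \<alpha>0 :: (complex ^ 'n) set)" unfolding S by (rule convex_CS) (use t in simp)
  define A :: "(complex^'n) set" where "A = {axis k 1 | k. True}"
  define B :: "(complex^'n) set" where "B = {eta_vec b k l | k l. k \<noteq> l}"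
  have E: "{x. x extreme_point_of (CS t :: (complex^'n) set)} = A \<union> B"
  proof (rule set_eqI, rule iffI)
    fix x assume "x \<in> {x. x extreme_point_of (CS t :: (complex^'n) set)}"
    then show "x \<in> A \<union> B" using classify[OF t, of x] bt by (auto simp: A_def B_def)
  next
    fix x assume "x \<in> A \<union> B"
    then show "x \<in> {x. x extreme_point_of (CS t :: (complex^'n) set)}"
      using axis_ext[OF t] eta_ext[OF t] bt by (auto simp: A_def B_def)
  qed
  have cA: "card A = CARD('n)"
  proof -
    have "A = (\<lambda>k. axis k 1) ` UNIV" by (auto simp: A_def)
    moreover have "inj (\<lambda>k::'n. axis k (1::complex))" by (auto intro: injI simp: axis_eq_axis)
    ultimately show ?thesis by (simp add: card_image)
  qed
  define P where "P = {p :: 'n \<times> 'n. fst p \<noteq> snd p}"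
  have injB: "inj_on (\<lambda>p. eta_vec b (fst p) (snd p)) P"
  proof (rule inj_onI)
    fix p q assume p: "p \<in> P" and q: "q \<in> P" and e: "eta_vec b (fst p) (snd p) = eta_vec b (fst q) (snd q)"
    obtain k l where pk: "p = (k,l)" by (cases p)
    obtain k' l' where qk: "q = (k',l')" by (cases q)
    have kl: "k \<noteq> l" "k' \<noteq> l'" using p q pk qk by (auto simp: P_def)
    have e': "eta_vec b k l = eta_vec b k' l'" using e pk qk by simp
    have "eta_vec b k l $ k = eta_vec b k' l' $ k" using e' by simp
    then have "k = k'" using b0 by (auto simp: eta_vec_def complex_eq_iff split: if_splits)
    moreover have "eta_vec b k l $ l = eta_vec b k' l' $ l" using e' by simp
    then have "l = l'" using b0 kl \<open>k = k'\<close> by (auto simp: eta_vec_def complex_eq_iff split: if_splits)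
    ultimately show "p = q" using pk qk by simp
  qed
  have BP: "B = (\<lambda>p. eta_vec b (fst p) (snd p)) ` P" unfolding B_def P_def by (auto intro!: image_eqI[where x="(_,_)"])
  have cP: "card P = CARD('n) * CARD('n) - CARD('n)"
  proof -
    have "P = UNIV - (\<lambda>k. (k,k)) ` UNIV" by (auto simp: P_def)
    moreover have "card ((\<lambda>k::'n. (k,k)) ` UNIV) = CARD('n)" by (simp add: card_image inj_on_def)
    moreover have "card (UNIV :: ('n\<times>'n) set) = CARD('n) * CARD('n)"
      by (metis UNIV_Times_UNIV card_cartesian_product)
    ultimately show ?thesis by (simp add: card_Diff_subset)
  qed
  have cB: "card B = CARD('n) * CARD('n) - CARD('n)" using BP injB cP by (simp add: card_image)
  have dj: "A \<inter> B = {}"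
  proof -
    have "axis j 1 \<noteq> eta_vec b k l" if "k \<noteq> l" for j k l :: 'n
    proof
      assume "axis j 1 = eta_vec b k l"
      then have "axis j 1 $ l = eta_vec b k l $ l" by simp
      then show False using that b0 by (auto simp: axis_def eta_vec_def complex_eq_iff split: if_splits)
    qed
    then show ?thesis by (auto simp: A_def B_def)
  qed
  have card: "card (A \<union> B) = CARD('n) ^ 2"
  proof -
    have fA: "finite A" unfolding A_def
      using finite_imageI[of "UNIV::'n set" "\<lambda>k. axis k (1::complex)"] by (simp add: full_SetCompr_eq)
    have fB: "finite B" using BP by simp
    have "card (A \<union> B) = card A + card B" using dj fA fB by (simp add: card_Un_disjoint)
    also have "\<dots> = CARD('n) ^ 2" using cA cB le_square[of "CARD('n)"] by (simp add: power2_eq_square)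
    finally show ?thesis .
  qed
  show ?thesis using b0 A1 A2 cv E card S by (simp add: A_def B_def)
qed

end
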